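(* Let $n\ge 1$, $d_1,\dots,d_n\ge 1$, $L_i\in\mathbb{C}^{d_i\times d_i}$ ($i=1,\dots,n$) and $C_{i,i-1}\in\mathbb{C}^{d_i\times d_{i-1}}$ ($i=2,\dots,n$). Assume: (i) each $L_i$ is invertible and diagonalizable, $L_iV_i=V_i\Lambda_i$ with $V_i$ invertible and $\Lambda_i=\mathrm{diag}(\lambda_{i,1},\dots,\lambda_{i,d_i})$; (ii) $\sigma(L_i)\cap\sigma(L_j)=\emptyset$ for all $i\neq j$; (iii) $\|L_1\|<\|L_2\|<\cdots<\|L_n\|\le 1$. Let $\mathsf{NonLin}(x_1,\dots,x_n)=(L_1x_1+N_1(x_1),\;L_2x_2+C_{2,1}x_1+N_2(x_1,x_2),\;\dots,\;L_nx_n+C_{n,n-1}x_{n-1}+N_n(x_{n-1},x_n))$ for some maps $N_1:\mathbb{C}^{d_1}\to\mathbb{C}^{d_1}$, $N_i:\mathbb{C}^{d_{i-1}}\times\mathbb{C}^{d_i}\to\mathbb{C}^{d_i}$, and let $\tau$ be a homeomorphism of $\mathbb{C}^{d_1}\times\cdots\times\mathbb{C}^{d_n}$ with $\mathsf{Lin}=\tau^{-1}\circ\mathsf{NonLin}\circ\tau$. Then for every $i\in\{1,\dots,n\}$, $s_i\in\{1,\dots,d_i\}$ and $y\in\mathbb{C}^{d_1}\times\cdots\times\mathbb{C}^{d_n}$, $$\lim_{t\to\infty}\frac{\Big|(\Psi_{i,s_i}\circ\tau^{-1})\big(\mathsf{NonLin}^{\circ t}(y)\big)-(\Psi_{i,s_i}\circ\tau^{-1})\Big((\tau\circ\mathsf{Nom}\circ\tau^{-1})^{\circ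 t}\big((\tau\circ\mathsf{pert}\circ\tau^{-1})(y)\big)\Big)\Big|}{\|L_i\|^t}=0,$$ i.e. $|\mathcal U_{\mathsf{NonLin}}^{\circ t}(\Psi_{i,s_i}\circ\tau^{-1})(y)-\mathcal U_{\tau\circ\mathsf{Nom}\circ\tau^{-1}}^{\circ t}(\Psi_{i,s_i}\circ\tau^{-1})((\tau\circ\mathsf{pert}\circ\tau^{-1})(y))|/\|L_i\|^t\to 0$, where $\mathcal U_F f=f\circ F$.
   Context: Each $\mathbb{C}^{d_i}$ carries a fixed norm, matrices carry the induced operator norm. $\mathsf{Lin}(x_1,\dots,x_n)=(L_1x_1,\;L_2x_2+C_{2,1}x_1,\;\dots,\;L_nx_n+C_{n,n-1}x_{n-1})$, $\mathsf{Nom}(x_1,\dots,x_n)=(L_1x_1,\dots,L_nx_n)$, $\mathsf{F}^{\circ t}$ is the $t$-fold iterate. $\psi_{i,s}(x_i)=\hat e_s^{*}V_i^{-1}x_i$ ($\hat e_s$ the $s$-th standard basis vector of $\mathbb{C}^{d_i}$) and $\Psi_{i,s}(x_1,\dots,x_n)=\psi_{i,s}(x_i)$. Matrices $D_{i,j}$ ($1\le j\le i\le n$) are defined recursively in $i$: $D_{i,i}=I_{d_i}$; for $i\ge 2$, $1\le j\le i-1$, $[\tilde C_{i,j}]_{\ell,m}=[V_i^{-1}C_{i,i-1}D_{i-1,j}V_j]_{\ell,m}(1-\lambda_{j,m}/\lambda_{i,\ell})^{-1}$ and $D_{i,j}=L_i^{-1}V_i\tilde C_{i,j}V_j^{-1}$.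 Define $\mathsf{pert}_1(x_1)=x_1$, $\mathsf{pert}_i(x_1,\dots,x_i)=x_i+\sum_{j=1}^{i-1}(-1)^{i-1-j}D_{i,j}\mathsf{pert}_j(x_1,\dots,x_j)$ for $i\ge2$, and $\mathsf{pert}(x)=(\mathsf{pert}_1(x_1),\dots,\mathsf{pert}_n(x_1,\dots,x_n))$. *)

theory Defs
  imports Complex_Main "Jordan_Normal_Form.Spectral_Radius"
begin

text \<open>Blocks are indexed by i in {1..n}; coordinates inside a block
  C^(d i) are 0-based (JNF vectors), so the paper's s in {1..d_i} is s in {0..<d i}.
  A point of C^(d 1) x ... x C^(d n) is a function x :: nat => complex vec with
  x i in carrier_vec (d i) for i in {1..n} and x i = 0_v 0 otherwise.\<close>

definition prodsp :: "nat \<Rightarrow> (nat \<Rightarrow> nat) \<Rightarrow> (nat \<Rightarrow> complex vec) set" where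
  "prodsp n d = {x. (\<forall>i\<in>{1..n}. x i \<in> carrier_vec (d i)) \<and> (\<forall>i. i \<notin> {1..n} \<longrightarrow> x i = 0\<^sub>v 0)}"

definition is_vnorm :: "nat \<Rightarrow> (complex vec \<Rightarrow> real) \<Rightarrow> bool" where
  "is_vnorm d N \<longleftrightarrow>
     (\<forall>v\<in>carrier_vec d. 0 \<le> N v \<and> (N v = 0 \<longleftrightarrow> v = 0\<^sub>v d)) \<and>
     (\<forall>c. \<forall>v\<in>carrier_vec d. N (c \<cdot>\<^sub>v v) = cmod c * N v) \<and>
     (\<forall>v\<in>carrier_vec d. \<forall>w\<in>carrier_vec d. N (v + w) \<le> N v + N w)"

definition op_norm :: "nat \<Rightarrow> (complex vec \<Rightarrow> real) \<Rightarrow> complex mat \<Rightarrow> real" where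
  "op_norm d N A = Sup ((\<lambda>v. N (A *\<^sub>v v)) ` {v \<in> carrier_vec d. N v = 1})"

definition minv :: "nat \<Rightarrow> complex mat \<Rightarrow> complex mat" where
  "minv d A = (SOME B. B \<in> carrier_mat d d \<and> A * B = 1\<^sub>m d \<and> B * A = 1\<^sub>m d)"

definition diag_of :: "nat \<Rightarrow> (nat \<Rightarrow> complex) \<Rightarrow> complex mat" where
  "diag_of d f = mat d d (\<lambda>(l, m). if l = m then f l else 0)"

definition distX :: "nat \<Rightarrow> (nat \<Rightarrow> nat) \<Rightarrow> (nat \<Rightarrow> complex vec) \<Rightarrow> (nat \<Rightarrow> complex vec) \<Rightarrow> real" where
  "distX n d x y = (\<Sum>i\<in>{1..n}. \<Sum>k<d i. cmod (x i $ k - y i $ k))"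

definition contX :: "nat \<Rightarrow> (nat \<Rightarrow> nat) \<Rightarrow> ((nat \<Rightarrow> complex vec) \<Rightarrow> (nat \<Rightarrow> complex vec)) \<Rightarrow> bool" where
  "contX n d f \<longleftrightarrow> (\<forall>x\<in>prodsp n d. \<forall>e>0. \<exists>\<delta>>0. \<forall>y\<in>prodsp n d.
      distX n d x y < \<delta> \<longrightarrow> distX n d (f x) (f y) < e)"

definition homeoX :: "nat \<Rightarrow> (nat \<Rightarrow> nat) \<Rightarrow> ((nat \<Rightarrow> complex vec) \<Rightarrow> (nat \<Rightarrow> complex vec))
     \<Rightarrow> ((nat \<Rightarrow> complex vec) \<Rightarrow> (nat \<Rightarrow> complex vec)) \<Rightarrow> bool" where
  "homeoX n d f g \<longleftrightarrow>
     (\<forall>x\<in>prodsp n d. f x \<in> prodsp n d) \<and> (\<forall>y\<in>prodsp n d. g y \<in> prodsp n d) \<and>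
     (\<forall>x\<in>prodsp n d. g (f x) = x) \<and> (\<forall>y\<in>prodsp n d. f (g y) = y) \<and>
     contX n d f \<and> contX n d g"

definition Lin :: "nat \<Rightarrow> (nat \<Rightarrow> complex mat) \<Rightarrow> (nat \<Rightarrow> complex mat) \<Rightarrow> (nat \<Rightarrow> complex vec) \<Rightarrow> (nat \<Rightarrow> complex vec)" where
  "Lin n L C x = (\<lambda>i. if i \<in> {1..n} then
       (if i = 1 then L 1 *\<^sub>v x 1 else L i *\<^sub>v x i + C i *\<^sub>v x (i - 1))
     else 0\<^sub>v 0)"

definition Nom :: "nat \<Rightarrow> (nat \<Rightarrow> complex mat) \<Rightarrow> (nat \<Rightarrow> complex vec) \<Rightarrow> (nat \<Rightarrow> complex vec)" where
  "Nom n L x = (\<lambda>i. if i \<in> {1..n} then L i *\<^sub>v x i else 0\<^sub>v 0)"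

definition NonLin :: "nat \<Rightarrow> (nat \<Rightarrow> complex mat) \<Rightarrow> (nat \<Rightarrow> complex mat) \<Rightarrow> (complex vec \<Rightarrow> complex vec)
     \<Rightarrow> (nat \<Rightarrow> complex vec \<Rightarrow> complex vec \<Rightarrow> complex vec) \<Rightarrow> (nat \<Rightarrow> complex vec) \<Rightarrow> (nat \<Rightarrow> complex vec)" where
  "NonLin n L C N1 N x = (\<lambda>i. if i \<in> {1..n} then
       (if i = 1 then L 1 *\<^sub>v x 1 + N1 (x 1)
        else L i *\<^sub>v x i + C i *\<^sub>v x (i - 1) + N i (x (i - 1)) (x i))
     else 0\<^sub>v 0)"

definition Psi :: "(nat \<Rightarrow> nat) \<Rightarrow> (nat \<Rightarrow> complex mat) \<Rightarrow> nat \<Rightarrow> nat \<Rightarrow> (nat \<Rightarrow> complex vec) \<Rightarrow> complex" where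
  "Psi d V i s x = (minv (d i) (V i) *\<^sub>v x i) $ s"

text \<open>The matrices D_(i,j), recursively in i (only meaningful for 1 <= j <= i).\<close>
primrec Dm :: "(nat \<Rightarrow> nat) \<Rightarrow> (nat \<Rightarrow> complex mat) \<Rightarrow> (nat \<Rightarrow> complex mat) \<Rightarrow> (nat \<Rightarrow> complex mat)
     \<Rightarrow> (nat \<Rightarrow> nat \<Rightarrow> complex) \<Rightarrow> nat \<Rightarrow> nat \<Rightarrow> complex mat" where
  "Dm d L C V lam 0 j = 1\<^sub>m (d 0)"
| "Dm d L C V lam (Suc k) j =
     (if j = Suc k then 1\<^sub>m (d (Suc k))
      else (let i = Suc k;
                M = minv (d i) (V i) * C i * Dm d L C V lam k j * V j;
                Ct = mat (d i) (d j) (\<lambda>(l, m). M $$ (l, m) * inverse (1 - lam j m / lam i l))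
            in minv (d i) (L i) * V i * Ct * minv (d j) (V j)))"

text \<open>pert: pert_1 = x_1, pert_i = x_i + sum_(j=1)^(i-1) (-1)^(i-1-j) D_(i,j) pert_j.
  pert_list k is the list [pert_1 x, ..., pert_k x].\<close>
primrec pert_list :: "(nat \<Rightarrow> nat) \<Rightarrow> (nat \<Rightarrow> complex mat) \<Rightarrow> (nat \<Rightarrow> complex mat) \<Rightarrow> (nat \<Rightarrow> complex mat)
     \<Rightarrow> (nat \<Rightarrow> nat \<Rightarrow> complex) \<Rightarrow> (nat \<Rightarrow> complex vec) \<Rightarrow> nat \<Rightarrow> complex vec list" where
  "pert_list d L C V lam x 0 = []"
| "pert_list d L C V lam x (Suc k) =
     (let ps = pert_list d L C V lam x k; i = Suc k in
      ps @ [x i + vec (d i) (\<lambda>k. \<Sum>j\<in>{1..<i}. (-1) ^ (i - 1 - j) * (Dm d L C V lam i j *\<^sub>v ps ! (j - 1)) $ k)])"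

definition pert :: "nat \<Rightarrow> (nat \<Rightarrow> nat) \<Rightarrow> (nat \<Rightarrow> complex mat) \<Rightarrow> (nat \<Rightarrow> complex mat) \<Rightarrow> (nat \<Rightarrow> complex mat)
     \<Rightarrow> (nat \<Rightarrow> nat \<Rightarrow> complex) \<Rightarrow> (nat \<Rightarrow> complex vec) \<Rightarrow> (nat \<Rightarrow> complex vec)" where
  "pert n d L C V lam x = (\<lambda>i. if i \<in> {1..n} then pert_list d L C V lam x i ! (i - 1) else 0\<^sub>v 0)"

end

theory Submission
  imports Defs
begin

section \<open>Norms\<close>

lemma vnorm_nonneg: "is_vnorm d N \<Longrightarrow> v \<in> carrier_vec d \<Longrightarrow> 0 \<le> N v"
  unfolding is_vnorm_def by blast

lemma vnorm_zero: "is_vnorm d N \<Longrightarrow> N (0\<^sub>v d) = 0"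
  unfolding is_vnorm_def using zero_carrier_vec[of d] by blast

lemma vnorm_smult: "is_vnorm d N \<Longrightarrow> v \<in> carrier_vec d \<Longrightarrow> N (c \<cdot>\<^sub>v v) = cmod c * N v"
  unfolding is_vnorm_def by blast

lemma vnorm_tri: "is_vnorm d N \<Longrightarrow> v \<in> carrier_vec d \<Longrightarrow> w \<in> carrier_vec d \<Longrightarrow> N (v + w) \<le> N v + N w"
  unfolding is_vnorm_def by blast

lemma vnorm_pos: "is_vnorm d N \<Longrightarrow> v \<in> carrier_vec d \<Longrightarrow> v \<noteq> 0\<^sub>v d \<Longrightarrow> 0 < N v"
  unfolding is_vnorm_def by (metis order_le_less)

lemma vnorm_upper:
  assumes N: "is_vnorm d N" and v: "v \<in> carrier_vec d"
  shows "N v \<le> (\<Sum>k<d. cmod (v $ k) * N (unit_vec d k))"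
proof -
  define tr where "tr m = vec d (\<lambda>k. if k < m then v $ k else 0)" for m
  have "m \<le> d \<Longrightarrow> N (tr m) \<le> (\<Sum>k<m. cmod (v $ k) * N (unit_vec d k))" for m
  proof (induction m)
    case 0
    have "tr 0 = 0\<^sub>v d" unfolding tr_def by (intro eq_vecI) auto
    then show ?case using vnorm_zero[OF N] by simp
  next
    case (Suc m)
    have eq: "tr (Suc m) = tr m + (v $ m) \<cdot>\<^sub>v unit_vec d m"
      unfolding tr_def by (intro eq_vecI) (auto simp: unit_vec_def less_Suc_eq)
    have "N (tr (Suc m)) \<le> N (tr m) + N ((v $ m) \<cdot>\<^sub>v unit_vec d m)"
      unfolding eq by (rule vnorm_tri[OF N]) (auto simp: tr_def)
    also have "\<dots> = N (tr m) + cmod (v $ m) * N (unit_vec d m)"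
      using vnorm_smult[OF N] by simp
    also have "\<dots> \<le> (\<Sum>k<Suc m. cmod (v $ k) * N (unit_vec d k))"
      using Suc by simp
    finally show ?case .
  qed
  moreover have "tr d = v" unfolding tr_def using v by (intro eq_vecI) auto
  ultimately show ?thesis by force
qed

lemma real_subseq_conv:
  fixes g :: "nat \<Rightarrow> real"
  assumes "\<And>t. \<bar>g t\<bar> \<le> B"
  shows "\<exists>r. strict_mono r \<and> convergent (\<lambda>t. g (r t))"
proof -
  obtain r where r: "strict_mono r" "monoseq (\<lambda>n. g (r n))" using seq_monosub by blast
  have "Bseq (\<lambda>n. g (r n))" using assms by (intro BseqI'[of _ B]) auto
  then show ?thesis using r Bseq_monoseq_convergent by blast
qed

lemma multi_subseq_conv:
  fixes f :: "nat \<Rightarrow> nat \<Rightarrow> real"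
  assumes "\<And>k t. \<bar>f k t\<bar> \<le> B"
  shows "\<exists>r. strict_mono r \<and> (\<forall>k<m. convergent (\<lambda>t. f k (r t)))"
proof (induction m)
  case 0
  show ?case by (rule exI[of _ id]) (auto simp: strict_mono_def)
next
  case (Suc m)
  then obtain r where r: "strict_mono r" "\<forall>k<m. convergent (\<lambda>t. f k (r t))" by blast
  obtain r2 where r2: "strict_mono r2" "convergent (\<lambda>t. f m (r (r2 t)))"
    using real_subseq_conv[of "\<lambda>t. f m (r t)" B] assms by blast
  have "convergent (\<lambda>t. f k (r (r2 t)))" if "k < Suc m" for k
  proof (cases "k = m")
    case True then show ?thesis using r2 by simp
  next
    case False
    then have "convergent (\<lambda>t. f k (r t))" using r that by simp
    then obtain l where "(\<lambda>t. f k (r t)) \<longlonglongrightarrow> l" by (auto simp: convergent_def)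
    then have "((\<lambda>t. f k (r t)) \<circ> r2) \<longlonglongrightarrow> l" using r2(1) by (rule LIMSEQ_subseq_LIMSEQ)
    then show ?thesis by (auto simp: convergent_def o_def)
  qed
  moreover have "strict_mono (r \<circ> r2)" using r r2 by (simp add: strict_mono_o)
  ultimately show ?case by (intro exI[of _ "r \<circ> r2"]) (auto simp: o_def)
qed

lemma vnorm_lower:
  assumes N: "is_vnorm d N"
  shows "\<exists>c>0. \<forall>v\<in>carrier_vec d. (\<Sum>k<d. cmod (v $ k)) \<le> c * N v"
proof (rule ccontr)
  define s where "s v = (\<Sum>k<d. cmod (v $ k))" for v :: "complex vec"
  assume "\<not> ?thesis"
  then have "\<forall>c>0. \<exists>v\<in>carrier_vec d. s v > c * N v" unfolding s_def by (auto simp: not_le)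
  then have "\<forall>t::nat. \<exists>v. v \<in> carrier_vec d \<and> s v > real (Suc t) * N v" by (metis of_nat_0_less_iff zero_less_Suc)
  then obtain w0 where w0: "\<And>t. w0 t \<in> carrier_vec d" "\<And>t. s (w0 t) > real (Suc t) * N (w0 t)" by metis
  have Nw0: "N (w0 t) \<ge> 0" for t using vnorm_nonneg[OF N w0(1)] .
  have spos: "s (w0 t) > 0" for t using w0(2)[of t] Nw0[of t]
    by (smt (verit) of_nat_0_le_iff mult_nonneg_nonneg)
  define w where "w t = complex_of_real (1 / s (w0 t)) \<cdot>\<^sub>v w0 t" for t
  have wc: "w t \<in> carrier_vec d" for t unfolding w_def using w0(1) by simp
  have sw: "s (w t) = 1" for t
  proof -
    have "s (w t) = (\<Sum>k<d. (1 / s (w0 t)) * cmod (w0 t $ k))"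
      unfolding s_def[of "w t"] unfolding w_def using w0(1)[of t] spos[of t]
      by (intro sum.cong) (auto simp: norm_mult simp del: of_real_divide)
    also have "\<dots> = (1 / s (w0 t)) * s (w0 t)" by (simp only: s_def sum_distrib_left)
    also have "\<dots> = 1" using spos[of t] by simp
    finally show ?thesis .
  qed
  have Nw: "N (w t) < 1 / real (Suc t)" for t
  proof -
    have "N (w t) = (1 / s (w0 t)) * N (w0 t)" unfolding w_def
      using vnorm_smult[OF N w0(1)] spos[of t] by (simp add: norm_divide)
    also have "\<dots> < 1 / real (Suc t)" using w0(2)[of t] spos[of t]
      by (simp add: field_simps)
    finally show ?thesis .
  qed
  have cb: "cmod (w t $ k) \<le> 1" if "k < d" for t k
  proof -
    have "cmod (w t $ k) \<le> s (w t)" unfolding s_def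
      by (rule member_le_sum) (use that in auto)
    then show ?thesis using sw by simp
  qed
  define f where "f k t = (if k < 2 * d then (if even k then Re (w t $ (k div 2)) else Im (w t $ (k div 2))) else 0)" for k t
  have fb: "\<bar>f k t\<bar> \<le> 1" for k t
  proof -
    have "k < 2 * d \<Longrightarrow> k div 2 < d" by linarith
    then show ?thesis
    unfolding f_def using cb[of "k div 2" t] abs_Re_le_cmod[of "w t $ (k div 2)"] abs_Im_le_cmod[of "w t $ (k div 2)"]
    by auto
  qed
  obtain r where r: "strict_mono r" "\<forall>k<2*d. convergent (\<lambda>t. f k (r t))"
    using multi_subseq_conv[of f 1, OF fb] by blast
  define a where "a = vec d (\<lambda>k. Complex (lim (\<lambda>t. f (2*k) (r t))) (lim (\<lambda>t. f (2*k+1) (r t))))"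
  have ac: "a \<in> carrier_vec d" unfolding a_def by simp
  have conv: "(\<lambda>t. w (r t) $ k) \<longlonglongrightarrow> a $ k" if k: "k < d" for k
  proof -
    have c1: "convergent (\<lambda>t. f (2*k) (r t))" "convergent (\<lambda>t. f (2*k+1) (r t))" using r k by auto
    have e1: "f (2*k) (r t) = Re (w (r t) $ k)" "f (Suc (2*k)) (r t) = Im (w (r t) $ k)" for t
      unfolding f_def using k by auto
    show ?thesis unfolding tendsto_complex_iff using c1 k
      by (simp add: a_def e1 convergent_LIMSEQ_iff)
  qed
  have conv0: "(\<lambda>t. cmod (a $ k - w (r t) $ k)) \<longlonglongrightarrow> 0" if "k < d" for k
  proof -
    have "(\<lambda>t. a $ k - w (r t) $ k) \<longlonglongrightarrow> a $ k - a $ k"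
      by (intro tendsto_intros conv that)
    then show ?thesis using tendsto_norm_zero by fastforce
  qed
  have "(\<lambda>t. s (w (r t))) \<longlonglongrightarrow> s a" unfolding s_def
    by (intro tendsto_intros conv) auto
  then have "(\<lambda>t. 1::real) \<longlonglongrightarrow> s a" using sw by simp
  then have "s a = 1" using LIMSEQ_const_iff by metis
  then have "a \<noteq> 0\<^sub>v d" unfolding s_def by auto
  then have Napos: "N a > 0" using vnorm_pos[OF N ac] by simp
  define u where "u t = inverse (real (Suc (r t))) + (\<Sum>k<d. cmod (a $ k - w (r t) $ k) * N (unit_vec d k))" for t
  have "(\<lambda>t. inverse (real (Suc (r t)))) \<longlonglongrightarrow> 0"
    using LIMSEQ_subseq_LIMSEQ[OF LIMSEQ_inverse_real_of_nat r(1)] by (simp add: o_def)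
  moreover have "(\<lambda>t. \<Sum>k<d. cmod (a $ k - w (r t) $ k) * N (unit_vec d k)) \<longlonglongrightarrow> (\<Sum>k<d. 0 * N (unit_vec d k))"
    by (intro tendsto_intros conv0) auto
  ultimately have "u \<longlonglongrightarrow> 0 + 0" unfolding u_def by (intro tendsto_add) auto
  moreover have "N a \<le> u t" for t
  proof -
    have dc: "a - w (r t) \<in> carrier_vec d" using ac wc by simp
    have "a = w (r t) + (a - w (r t))" using ac wc[of "r t"] by auto
    then have "N a \<le> N (w (r t)) + N (a - w (r t))"
      using vnorm_tri[OF N wc dc] by metis
    also have "N (a - w (r t)) \<le> (\<Sum>k<d. cmod ((a - w (r t)) $ k) * N (unit_vec d k))"
      by (rule vnorm_upper[OF N dc])
    also have "\<dots> = (\<Sum>k<d. cmod (a $ k - w (r t) $ k) * N (unit_vec d k))"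
      using ac wc[of "r t"] by (intro sum.cong) auto
    finally show ?thesis using Nw[of "r t"] unfolding u_def by (simp add: inverse_eq_divide)
  qed
  ultimately have "N a \<le> 0" using LIMSEQ_le_const by (metis add_0)
  then show False using Napos by simp
qed

lemma mat_vec_entry:
  assumes A: "A \<in> carrier_mat r c" and v: "v \<in> carrier_vec c" and k: "k < r"
  shows "(A *\<^sub>v v) $ k = (\<Sum>l<c. A $$ (k, l) * v $ l)"
  using A v k by (auto simp: scalar_prod_def lessThan_atLeast0 intro!: sum.cong)

lemma mat_vec_entry_bound:
  assumes A: "A \<in> carrier_mat r c" and v: "v \<in> carrier_vec c" and k: "k < r"
  shows "cmod ((A *\<^sub>v v) $ k) \<le> (\<Sum>l<c. cmod (A $$ (k, l))) * (\<Sum>l<c. cmod (v $ l))"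
proof -
  have "cmod ((A *\<^sub>v v) $ k) \<le> (\<Sum>l<c. cmod (A $$ (k, l)) * cmod (v $ l))"
    unfolding mat_vec_entry[OF A v k] by (rule order.trans[OF norm_sum]) (simp add: norm_mult)
  also have "\<dots> \<le> (\<Sum>l<c. cmod (A $$ (k, l)) * (\<Sum>l<c. cmod (v $ l)))"
    by (intro sum_mono mult_left_mono member_le_sum) auto
  also have "\<dots> = (\<Sum>l<c. cmod (A $$ (k, l))) * (\<Sum>l<c. cmod (v $ l))"
    by (simp add: sum_distrib_right)
  finally show ?thesis .
qed

lemma opnorm_bdd:
  assumes N: "is_vnorm d N" and A: "A \<in> carrier_mat d d"
  shows "bdd_above ((\<lambda>v. N (A *\<^sub>v v)) ` {v \<in> carrier_vec d. N v = 1})"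
proof -
  obtain c where c: "c > 0" "\<forall>v\<in>carrier_vec d. (\<Sum>k<d. cmod (v $ k)) \<le> c * N v"
    using vnorm_lower[OF N] by blast
  define K where "K = (\<Sum>k<d. (\<Sum>l<d. cmod (A $$ (k, l))) * c * N (unit_vec d k))"
  have "N (A *\<^sub>v v) \<le> K" if v: "v \<in> carrier_vec d" "N v = 1" for v
  proof -
    have Av: "A *\<^sub>v v \<in> carrier_vec d" using A v by simp
    have "N (A *\<^sub>v v) \<le> (\<Sum>k<d. cmod ((A *\<^sub>v v) $ k) * N (unit_vec d k))"
      by (rule vnorm_upper[OF N Av])
    also have "\<dots> \<le> K" unfolding K_def
    proof (intro sum_mono mult_right_mono)
      fix k assume "k \<in> {..<d}"
      then have k: "k < d" by simp
      have "cmod ((A *\<^sub>v v) $ k) \<le> (\<Sum>l<d. cmod (A $$ (k, l))) * (\<Sum>l<d. cmod (v $ l))"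
        by (rule mat_vec_entry_bound[OF A v(1) k])
      also have "\<dots> \<le> (\<Sum>l<d. cmod (A $$ (k, l))) * c"
        using c(2) v by (intro mult_left_mono) (auto intro: sum_nonneg)
      finally show "cmod ((A *\<^sub>v v) $ k) \<le> (\<Sum>l<d. cmod (A $$ (k, l))) * c" .
      show "0 \<le> N (unit_vec d k)" by (rule vnorm_nonneg[OF N]) simp
    qed
    finally show ?thesis .
  qed
  then show ?thesis by (intro bdd_aboveI[of _ K]) auto
qed

lemma eig_le_opnorm:
  assumes N: "is_vnorm d N" and A: "A \<in> carrier_mat d d" and u: "u \<in> carrier_vec d"
    and u0: "u \<noteq> 0\<^sub>v d" and ev: "A *\<^sub>v u = l \<cdot>\<^sub>v u"
  shows "cmod l \<le> op_norm d N A"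
proof -
  have Nu: "N u > 0" using vnorm_pos[OF N u u0] .
  define u' where "u' = complex_of_real (1 / N u) \<cdot>\<^sub>v u"
  have u'c: "u' \<in> carrier_vec d" unfolding u'_def using u by simp
  have Nu': "N u' = 1" unfolding u'_def using vnorm_smult[OF N u] Nu by (simp add: norm_divide)
  have "A *\<^sub>v u' = l \<cdot>\<^sub>v u'" unfolding u'_def
    using mult_mat_vec[OF A u] ev u by (auto simp: smult_smult_assoc mult.commute)
  then have "N (A *\<^sub>v u') = cmod l" using vnorm_smult[OF N u'c] Nu' by simp
  then have "cmod l \<in> (\<lambda>v. N (A *\<^sub>v v)) ` {v \<in> carrier_vec d. N v = 1}" using u'c Nu' by force
  then show ?thesis unfolding op_norm_def by (rule cSup_upper[OF _ opnorm_bdd[OF N A]])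
qed

section \<open>Matrix algebra\<close>

lemma minv:
  assumes A: "A \<in> carrier_mat m m" and inv: "invertible_mat A"
  shows "minv m A \<in> carrier_mat m m" "A * minv m A = 1\<^sub>m m" "minv m A * A = 1\<^sub>m m"
proof -
  obtain B where B0: "A * B = 1\<^sub>m m" "B * A = 1\<^sub>m (dim_row B)"
    using inv A unfolding invertible_mat_def inverts_mat_def by auto
  have c1: "dim_col B = m" using arg_cong[OF B0(1), of dim_col] by simp
  have r1: "dim_row B = m" using arg_cong[OF B0(2), of dim_col] A by simp
  have B: "A * B = 1\<^sub>m m" "B * A = 1\<^sub>m m" using B0 r1 by auto
  have Bc: "B \<in> carrier_mat m m" using c1 r1 by auto
  have "\<exists>B. B \<in> carrier_mat m m \<and> A * B = 1\<^sub>m m \<and> B * A = 1\<^sub>m m" using Bc B by blast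
  then have "minv m A \<in> carrier_mat m m \<and> A * minv m A = 1\<^sub>m m \<and> minv m A * A = 1\<^sub>m m"
    unfolding minv_def by (rule someI_ex)
  then show "minv m A \<in> carrier_mat m m" "A * minv m A = 1\<^sub>m m" "minv m A * A = 1\<^sub>m m" by auto
qed

lemma diag_of_carrier[simp]: "diag_of m f \<in> carrier_mat m m"
  unfolding diag_of_def by simp

lemma diag_of_dim[simp]: "dim_row (diag_of m f) = m" "dim_col (diag_of m f) = m"
  unfolding diag_of_def by simp_all


lemma mult_mat_zero_vec: "A \<in> carrier_mat r c \<Longrightarrow> A *\<^sub>v 0\<^sub>v c = 0\<^sub>v r"
  by (intro eq_vecI) auto

lemma smult_zero_vec: "0 \<cdot>\<^sub>v (v :: complex vec) = 0\<^sub>v (dim_vec v)"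
  by (intro eq_vecI) auto

lemma diag_mult_entry:
  assumes X: "X \<in> carrier_mat r c" and l: "l < r" and m: "m < c"
  shows "(diag_of r f * X) $$ (l, m) = f l * X $$ (l, m)"
proof -
  have "(diag_of r f * X) $$ (l, m) = (\<Sum>i = 0..<r. (if l = i then f l else 0) * X $$ (i, m))"
    using X l m by (auto simp: scalar_prod_def diag_of_def intro!: sum.cong)
  also have "\<dots> = (\<Sum>i\<in>{0..<r}. if i = l then f l * X $$ (l, m) else 0)"
    by (rule sum.cong) auto
  also have "\<dots> = f l * X $$ (l, m)" using l by (subst sum.delta) auto
  finally show ?thesis .
qed

lemma mult_diag_entry:
  assumes X: "X \<in> carrier_mat r c" and l: "l < r" and m: "m < c"
  shows "(X * diag_of c f) $$ (l, m) = X $$ (l, m) * f m"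
proof -
  have "(X * diag_of c f) $$ (l, m) = (\<Sum>i = 0..<c. X $$ (l, i) * (if i = m then f i else 0))"
    using X l m by (auto simp: scalar_prod_def diag_of_def intro!: sum.cong)
  also have "\<dots> = (\<Sum>i\<in>{0..<c}. if i = m then X $$ (l, m) * f m else 0)"
    by (rule sum.cong) auto
  also have "\<dots> = X $$ (l, m) * f m" using m by (subst sum.delta) auto
  finally show ?thesis .
qed

lemma assoc_dim:
  "dim_col A = dim_row B \<Longrightarrow> dim_col B = dim_row X \<Longrightarrow> (A * B) * X = A * (B * X)"
  by (rule assoc_mult_mat[of A "dim_row A" "dim_col A" B "dim_col B" X "dim_col X"]) auto

lemma assoc_dim_vec:
  "dim_col A = dim_row B \<Longrightarrow> dim_col B = dim_vec v \<Longrightarrow> (A * B) *\<^sub>v v = A *\<^sub>v (B *\<^sub>v v)"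
  by (rule assoc_mult_mat_vec[of A "dim_row A" "dim_col A" B "dim_col B" v]) auto

lemma pert_list_length: "length (pert_list d L C V lam x k) = k"
  by (induction k) (auto simp: Let_def)

lemma pert_list_stable:
  "1 \<le> j \<Longrightarrow> j \<le> k \<Longrightarrow> pert_list d L C V lam x k ! (j - 1) = pert_list d L C V lam x j ! (j - 1)"
proof (induction k)
  case 0 then show ?case by simp
next
  case (Suc k)
  show ?case
  proof (cases "j = Suc k")
    case True then show ?thesis by simp
  next
    case False
    then have "j \<le> k" using Suc by simp
    then have lt: "j - 1 < length (pert_list d L C V lam x k)" using Suc(2) by (simp add: pert_list_length)
    then have "pert_list d L C V lam x (Suc k) ! (j - 1) = pert_list d L C V lam x k ! (j - 1)"
      by (simp only: pert_list.simps Let_def nth_append lt if_True)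
    then show ?thesis using Suc \<open>j \<le> k\<close> by simp
  qed
qed

definition pv where "pv d L C V lam x j = pert_list d L C V lam x j ! (j - 1)"

lemma pv_eq:
  assumes "1 \<le> i"
  shows "pv d L C V lam x i = x i + vec (d i) (\<lambda>q. \<Sum>j\<in>{1..<i}. (-1) ^ (i - 1 - j) * (Dm d L C V lam i j *\<^sub>v pv d L C V lam x j) $ q)"
proof -
  obtain k where k: "i = Suc k" using assms by (cases i) auto
  have st: "pert_list d L C V lam x k ! (j - 1) = pv d L C V lam x j" if "j \<in> {1..<i}" for j
    using pert_list_stable[of j k] that k unfolding pv_def by auto
  have e: "(ps @ [v]) ! k = v" if "length ps = k" for ps and v :: "complex vec" using that by (metis nth_append_length)
  have "pv d L C V lam x i = x i + vec (d i) (\<lambda>q. \<Sum>j\<in>{1..<i}. (-1) ^ (i - 1 - j) * (Dm d L C V lam i j *\<^sub>v pert_list d L C V lam x k ! (j - 1)) $ q)"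
    unfolding pv_def k by (simp only: pert_list.simps Let_def diff_Suc_1) (rule e[OF pert_list_length])
  also have "(\<lambda>q. \<Sum>j\<in>{1..<i}. (-1) ^ (i - 1 - j) * (Dm d L C V lam i j *\<^sub>v pert_list d L C V lam x k ! (j - 1)) $ q)
      = (\<lambda>q. \<Sum>j\<in>{1..<i}. (-1) ^ (i - 1 - j) * (Dm d L C V lam i j *\<^sub>v pv d L C V lam x j) $ q)"
    by (intro ext sum.cong refl) (simp only: st)
  finally show ?thesis .
qed

lemma pv_carrier: "1 \<le> i \<Longrightarrow> pv d L C V lam x i \<in> carrier_vec (d i)"
  unfolding carrier_vec_def by (subst pv_eq) auto

lemma pert_pv: "i \<in> {1..n} \<Longrightarrow> pert n d L C V lam x i = pv d L C V lam x i"
  unfolding pert_def pv_def by simp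

lemma Dm_diag: "1 \<le> i \<Longrightarrow> Dm d L C V lam i i = 1\<^sub>m (d i)"
  by (cases i) auto

lemma mat_vec_lin:
  fixes A :: "complex mat"
  assumes A: "A \<in> carrier_mat r c" and w: "w \<in> carrier_vec c" and k: "k < r"
    and W: "\<And>j. j \<in> J \<Longrightarrow> W j \<in> carrier_vec c"
    and we: "\<And>q. q < c \<Longrightarrow> w $ q = (\<Sum>j\<in>J. a j * W j $ q)"
  shows "(A *\<^sub>v w) $ k = (\<Sum>j\<in>J. a j * (A *\<^sub>v W j) $ k)"
proof -
  have "(A *\<^sub>v w) $ k = (\<Sum>l<c. A $$ (k, l) * (\<Sum>j\<in>J. a j * W j $ l))"
    unfolding mat_vec_entry[OF A w k] using we by simp
  also have "\<dots> = (\<Sum>l<c. \<Sum>j\<in>J. a j * (A $$ (k, l) * W j $ l))"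
    unfolding sum_distrib_left by (intro sum.cong refl) (simp add: algebra_simps)
  also have "\<dots> = (\<Sum>j\<in>J. \<Sum>l<c. a j * (A $$ (k, l) * W j $ l))"
    by (rule sum.swap)
  also have "\<dots> = (\<Sum>j\<in>J. a j * (A *\<^sub>v W j) $ k)"
    using mat_vec_entry[OF A W k] by (simp add: sum_distrib_left)
  finally show ?thesis .
qed

locale setting =
  fixes n :: nat and d :: "nat \<Rightarrow> nat" and L C V :: "nat \<Rightarrow> complex mat"
    and lam :: "nat \<Rightarrow> nat \<Rightarrow> complex"
  assumes Ldim: "\<forall>i\<in>{1..n}. L i \<in> carrier_mat (d i) (d i)"
    and Cdim: "\<forall>i\<in>{2..n}. C i \<in> carrier_mat (d i) (d (i - 1))"
    and Linv: "\<forall>i\<in>{1..n}. invertible_mat (L i)"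
    and Vdim: "\<forall>i\<in>{1..n}. V i \<in> carrier_mat (d i) (d i)"
    and Vinv: "\<forall>i\<in>{1..n}. invertible_mat (V i)"
    and diagz: "\<forall>i\<in>{1..n}. L i * V i = V i * diag_of (d i) (lam i)"
    and disj: "\<forall>i\<in>{1..n}. \<forall>j\<in>{1..n}. i \<noteq> j \<longrightarrow> spectrum (L i) \<inter> spectrum (L j) = {}"
begin

abbreviation "Li i \<equiv> minv (d i) (L i)"
abbreviation "Vi i \<equiv> minv (d i) (V i)"
abbreviation "Lam i \<equiv> diag_of (d i) (lam i)"
abbreviation "D i j \<equiv> Dm d L C V lam i j"

lemma carr:
  assumes "i \<in> {1..n}"
  shows "L i \<in> carrier_mat (d i) (d i)" "V i \<in> carrier_mat (d i) (d i)"
    "Li i \<in> carrier_mat (d i) (d i)" "Vi i \<in> carrier_mat (d i) (d i)"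
    "L i * Li i = 1\<^sub>m (d i)" "Li i * L i = 1\<^sub>m (d i)"
    "V i * Vi i = 1\<^sub>m (d i)" "Vi i * V i = 1\<^sub>m (d i)"
  using assms Ldim Vdim Linv Vinv minv by auto

lemma dims:
  assumes "i \<in> {1..n}"
  shows "dim_row (L i) = d i" "dim_col (L i) = d i" "dim_row (V i) = d i" "dim_col (V i) = d i"
   "dim_row (Li i) = d i" "dim_col (Li i) = d i" "dim_row (Vi i) = d i" "dim_col (Vi i) = d i"
  using carr[OF assms] by auto

lemma cancel:
  assumes i: "i \<in> {1..n}" and X0: "dim_row X = d i"
  shows "V i * (Vi i * X) = X" "Vi i * (V i * X) = X" "L i * (Li i * X) = X" "Li i * (L i * X) = X"
proof -
  have X: "X \<in> carrier_mat (d i) (dim_col X)" using X0 by auto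
  note c = carr[OF i]
  show "V i * (Vi i * X) = X" using assoc_mult_mat[OF c(2) c(4) X, symmetric] c X by simp
  show "Vi i * (V i * X) = X" using assoc_mult_mat[OF c(4) c(2) X, symmetric] c X by simp
  show "L i * (Li i * X) = X" using assoc_mult_mat[OF c(1) c(3) X, symmetric] c X by simp
  show "Li i * (L i * X) = X" using assoc_mult_mat[OF c(3) c(1) X, symmetric] c X by simp
qed

lemma cancelv:
  assumes i: "i \<in> {1..n}" and X: "X \<in> carrier_vec (d i)"
  shows "V i *\<^sub>v (Vi i *\<^sub>v X) = X" "Vi i *\<^sub>v (V i *\<^sub>v X) = X" "L i *\<^sub>v (Li i *\<^sub>v X) = X" "Li i *\<^sub>v (L i *\<^sub>v X) = X"
proof -
  note c = carr[OF i]
  show "V i *\<^sub>v (Vi i *\<^sub>v X) = X" using assoc_mult_mat_vec[OF c(2) c(4) X, symmetric] c X by simp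
  show "Vi i *\<^sub>v (V i *\<^sub>v X) = X" using assoc_mult_mat_vec[OF c(4) c(2) X, symmetric] c X by simp
  show "L i *\<^sub>v (Li i *\<^sub>v X) = X" using assoc_mult_mat_vec[OF c(1) c(3) X, symmetric] c X by simp
  show "Li i *\<^sub>v (L i *\<^sub>v X) = X" using assoc_mult_mat_vec[OF c(3) c(1) X, symmetric] c X by simp
qed

lemma LV:
  assumes i: "i \<in> {1..n}" and X0: "dim_row X = d i"
  shows "L i * (V i * X) = V i * (Lam i * X)"
proof -
  have X: "X \<in> carrier_mat (d i) (dim_col X)" using X0 by auto
  note c = carr[OF i]
  have "L i * (V i * X) = (L i * V i) * X" using assoc_mult_mat[OF c(1) c(2) X] by simp
  also have "\<dots> = (V i * Lam i) * X" using diagz i by simp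
  also have "\<dots> = V i * (Lam i * X)" using assoc_mult_mat[OF c(2) diag_of_carrier X] by simp
  finally show ?thesis .
qed

lemma ViL:
  assumes i: "i \<in> {1..n}"
  shows "Vi i * L i = Lam i * Vi i"
proof -
  note c = carr[OF i]
  have "Vi i * L i = Vi i * (L i * (V i * Vi i))" using c by simp
  also have "\<dots> = Vi i * (V i * (Lam i * Vi i))" using c LV[OF i, of "Vi i"] by simp
  also have "\<dots> = Lam i * Vi i" using c cancel(2)[OF i, of "Lam i * Vi i"] by simp
  finally show ?thesis .
qed

lemma ViL':
  assumes i: "i \<in> {1..n}" and X0: "dim_row X = d i"
  shows "Vi i * (L i * X) = Lam i * (Vi i * X)"
proof -
  have X: "X \<in> carrier_mat (d i) (dim_col X)" using X0 by auto
  note c = carr[OF i]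
  have "Vi i * (L i * X) = (Vi i * L i) * X" using assoc_mult_mat[OF c(4) c(1) X] by simp
  also have "\<dots> = (Lam i * Vi i) * X" using ViL[OF i] by simp
  also have "\<dots> = Lam i * (Vi i * X)" using assoc_mult_mat[OF diag_of_carrier c(4) X] by simp
  finally show ?thesis .
qed

lemma Dm_carrier:
  assumes "1 \<le> j" "j \<le> i" "i \<le> n"
  shows "D i j \<in> carrier_mat (d i) (d j)"
proof (cases "j = i")
  case True then show ?thesis by (cases i) auto
next
  case False
  then obtain k where k: "i = Suc k" using assms by (cases i) auto
  have i: "i \<in> {1..n}" and j: "j \<in> {1..n}" using assms by auto
  show ?thesis using k False carr[OF i] carr[OF j] by (auto simp: Let_def)
qed

lemma eigvec:
  assumes i: "i \<in> {1..n}" and l: "l < d i"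
  shows "eigenvector (L i) (col (V i) l) (lam i l)"
proof -
  note c = carr[OF i]
  have ev: "L i *\<^sub>v col (V i) l = lam i l \<cdot>\<^sub>v col (V i) l"
  proof -
    have "L i *\<^sub>v col (V i) l = col (L i * V i) l" using col_mult2[OF c(1) c(2) l] by simp
    also have "\<dots> = col (V i * Lam i) l" using diagz i by simp
    also have "\<dots> = lam i l \<cdot>\<^sub>v col (V i) l"
    proof (rule eq_vecI)
      fix k assume "k < dim_vec (lam i l \<cdot>\<^sub>v col (V i) l)"
      then have k: "k < d i" using c by simp
      have "col (V i * Lam i) l $ k = (\<Sum>m<d i. V i $$ (k, m) * (if m = l then lam i l else 0))"
        using c k l by (auto simp: scalar_prod_def diag_of_def lessThan_atLeast0 intro!: sum.cong)
      also have "\<dots> = V i $$ (k, l) * lam i l" using l by (simp add: if_distrib cong: if_cong)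
      finally show "col (V i * Lam i) l $ k = (lam i l \<cdot>\<^sub>v col (V i) l) $ k"
        using c k l by simp
    qed (use c in simp)
    finally show ?thesis .
  qed
  have nz: "col (V i) l \<noteq> 0\<^sub>v (d i)"
  proof
    assume z: "col (V i) l = 0\<^sub>v (d i)"
    have "unit_vec (d i) l = col (Vi i * V i) l" using c l by simp
    also have "\<dots> = Vi i *\<^sub>v col (V i) l" using col_mult2[OF c(4) c(2) l] .
    also have "\<dots> = 0\<^sub>v (d i)" using z c mult_mat_zero_vec by simp
    finally show False using l by (metis index_unit_vec(2) index_zero_vec(1) zero_neq_one)
  qed
  show ?thesis unfolding eigenvector_def using ev nz c l by simp
qed

lemma lam_nz:
  assumes i: "i \<in> {1..n}" and l: "l < d i"
  shows "lam i l \<noteq> 0"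
proof
  assume z: "lam i l = 0"
  note c = carr[OF i]
  have e: "eigenvector (L i) (col (V i) l) (lam i l)" by (rule eigvec[OF i l])
  have cv: "col (V i) l \<in> carrier_vec (d i)" using c l by simp
  have "col (V i) l = Li i *\<^sub>v (L i *\<^sub>v col (V i) l)" using cancelv(4)[OF i cv] by simp
  also have "\<dots> = 0\<^sub>v (d i)" using e z c mult_mat_zero_vec smult_zero_vec unfolding eigenvector_def by simp
  finally show False using e c unfolding eigenvector_def by simp
qed

lemma lam_neq:
  assumes i: "i \<in> {1..n}" and j: "j \<in> {1..n}" and ij: "i \<noteq> j" and l: "l < d i" and m: "m < d j"
  shows "lam i l \<noteq> lam j m"
proof
  assume eq: "lam i l = lam j m"
  have "lam i l \<in> spectrum (L i)" using eigvec[OF i l] unfolding spectrum_def eigenvalue_def by auto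
  moreover have "lam i l \<in> spectrum (L j)" using eigvec[OF j m] eq unfolding spectrum_def eigenvalue_def by auto
  ultimately show False using disj i j ij by blast
qed

lemma sylv:
  assumes ji: "1 \<le> j" "j < i" "i \<le> n"
  shows "L i * D i j = D i j * L j + C i * D (i - 1) j"
proof -
  obtain k where k: "i = Suc k" using ji by (cases i) auto
  have i: "i \<in> {1..n}" and j: "j \<in> {1..n}" and kk: "k \<in> {1..n}" and i2: "i \<in> {2..n}" and jk: "j \<le> k"
    using ji k by auto
  note ci = carr[OF i] and cj = carr[OF j]
  have Cc: "C i \<in> carrier_mat (d i) (d k)" using bspec[OF Cdim i2] k by simp
  have Dk: "D k j \<in> carrier_mat (d k) (d j)" using Dm_carrier[of j k] ji jk k by auto
  define M where "M = Vi i * C i * D k j * V j"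
  define Ct where "Ct = mat (d i) (d j) (\<lambda>(l, m). M $$ (l, m) * inverse (1 - lam j m / lam i l))"
  have Mc: "M \<in> carrier_mat (d i) (d j)" unfolding M_def using ci(4) cj(2) Cc Dk by (meson mult_carrier_mat)
  have Ctc: "Ct \<in> carrier_mat (d i) (d j)" unfolding Ct_def by simp
  have Deq: "D i j = Li i * V i * Ct * Vi j"
    using ji k unfolding M_def Ct_def by (simp add: Let_def)
  have key: "Lam i * Ct = Ct * Lam j + Lam i * M"
  proof (rule eq_matI)
    fix l m assume "l < dim_row (Ct * Lam j + Lam i * M)" "m < dim_col (Ct * Lam j + Lam i * M)"
    then have l: "l < d i" and m: "m < d j" using Ctc Mc by auto
    have nz: "lam i l \<noteq> 0" by (rule lam_nz[OF i l])
    have ne: "lam i l \<noteq> lam j m" using lam_neq[OF i j _ l m] ji by auto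
    have "lam i l * (M $$ (l, m) * inverse (1 - lam j m / lam i l)) =
        M $$ (l, m) * inverse (1 - lam j m / lam i l) * lam j m + lam i l * M $$ (l, m)"
    proof -
      have "1 - lam j m / lam i l = (lam i l - lam j m) / lam i l" using nz by (simp add: field_simps)
      moreover have "lam i l - lam j m \<noteq> 0" using ne by simp
      ultimately show ?thesis using nz by (simp add: field_simps)
    qed
    then show "(Lam i * Ct) $$ (l, m) = (Ct * Lam j + Lam i * M) $$ (l, m)"
      using diag_mult_entry[OF Ctc l m] mult_diag_entry[OF Ctc l m] diag_mult_entry[OF Mc l m] Ctc Mc l m
      by (simp add: Ct_def)
  qed (use Ctc Mc in auto)
  define Y where "Y = V i * (Ct * Vi j)"
  note dd = dims[OF i] dims[OF j] carrier_matD[OF Ctc] carrier_matD[OF Mc] carrier_matD[OF Cc] carrier_matD[OF Dk]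
  have Yc: "Y \<in> carrier_mat (d i) (d j)" unfolding Y_def using ci cj Ctc by simp
  have DY: "D i j = Li i * Y" unfolding Deq Y_def
    by (simp only: assoc_mult_mat[OF mult_carrier_mat[OF ci(3) ci(2)] Ctc cj(4)] assoc_mult_mat[OF ci(3) ci(2) mult_carrier_mat[OF Ctc cj(4)]])
  have LD: "L i * D i j = Y" unfolding DY using cancel(3)[OF i, of Y] Yc by simp
  have CD: "V i * (M * Vi j) = C i * D k j"
  proof -
    have "V i * (M * Vi j) = V i * (Vi i * (C i * (D k j * (V j * Vi j))))"
      unfolding M_def using dd by (simp add: assoc_dim del: assoc_mult_mat)
    also have "\<dots> = C i * D k j" using cancel(1)[OF i] ci cj Cc Dk by simp
    finally show ?thesis .
  qed
  have c1: "Ct * Lam j \<in> carrier_mat (d i) (d j)" "Lam i * M \<in> carrier_mat (d i) (d j)" using Ctc Mc by auto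
  have "L i * Y = V i * (Lam i * (Ct * Vi j))" unfolding Y_def using LV[OF i] Ctc cj by simp
  also have "\<dots> = V i * ((Lam i * Ct) * Vi j)" using dd by (simp add: assoc_dim del: assoc_mult_mat)
  also have "\<dots> = V i * ((Ct * Lam j + Lam i * M) * Vi j)" using key by simp
  also have "\<dots> = V i * ((Ct * Lam j) * Vi j + (Lam i * M) * Vi j)"
    by (simp only: add_mult_distrib_mat[OF c1 cj(4)])
  also have "\<dots> = V i * ((Ct * Lam j) * Vi j) + V i * ((Lam i * M) * Vi j)"
    by (rule mult_add_distrib_mat[OF ci(2)]) (use c1 cj in auto)
  also have "\<dots> = V i * (Ct * (Lam j * Vi j)) + V i * (Lam i * (M * Vi j))"
    using dd by (simp add: assoc_dim del: assoc_mult_mat)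
  also have "\<dots> = V i * (Ct * (Vi j * L j)) + L i * (V i * (M * Vi j))"
    using ViL[OF j] LV[OF i, of "M * Vi j"] dd by simp
  also have "\<dots> = V i * (Ct * (Vi j * L j)) + L i * (C i * D k j)" using CD by simp
  finally have LY: "L i * Y = V i * (Ct * (Vi j * L j)) + L i * (C i * D k j)" .
  have c2: "V i * (Ct * (Vi j * L j)) \<in> carrier_mat (d i) (d j)" "L i * (C i * D k j) \<in> carrier_mat (d i) (d j)"
    using ci cj Ctc Cc Dk by auto
  have "Y = Li i * (L i * Y)" using cancel(4)[OF i, of Y] Yc by simp
  also have "\<dots> = Li i * (V i * (Ct * (Vi j * L j))) + Li i * (L i * (C i * D k j))"
    unfolding LY by (rule mult_add_distrib_mat[OF ci(3) c2])
  also have "\<dots> = D i j * L j + C i * D k j"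
  proof -
    have "Li i * (L i * (C i * D k j)) = C i * D k j" using cancel(4)[OF i, of "C i * D k j"] dd by simp
    moreover have "Li i * (V i * (Ct * (Vi j * L j))) = D i j * L j"
      unfolding Deq using dd by (simp add: assoc_dim del: assoc_mult_mat)
    ultimately show ?thesis by simp
  qed
  finally show ?thesis using LD k by simp
qed


end

context setting begin

abbreviation "P x j \<equiv> pv d L C V lam x j"
abbreviation "U x j t \<equiv> ((\<lambda>v. L j *\<^sub>v v) ^^ t) (P x j)"

lemma U_carrier: assumes j: "j \<in> {1..n}" shows "U x j t \<in> carrier_vec (d j)"
proof (induction t)
  case 0 then show ?case using pv_carrier j by auto
next
  case (Suc t) then show ?case using mult_mat_vec_carrier[OF carr(1)[OF j]] by simp
qed

lemma split_sum: "1 \<le> (i::nat) \<Longrightarrow> (\<Sum>j\<in>{1..i}. f j) = f i + (\<Sum>j\<in>{1..<i}. f j)"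
proof -
  assume "1 \<le> i"
  then have "{1..i} = insert i {1..<i}" by auto
  then show ?thesis by simp
qed

lemma sign: "j < i \<Longrightarrow> (-1::complex) ^ (i - j) = - ((-1) ^ (i - 1 - j))"
proof -
  assume "j < i"
  then have "i - j = Suc (i - 1 - j)" by simp
  then show ?thesis by simp
qed

lemma base:
  assumes i: "i \<in> {1..n}" and xi: "x i \<in> carrier_vec (d i)" and q: "q < d i"
  shows "x i $ q = (\<Sum>j\<in>{1..i}. (-1) ^ (i - j) * (D i j *\<^sub>v P x j) $ q)"
proof -
  define S where "S q = (\<Sum>j\<in>{1..<i}. (-1) ^ (i - 1 - j) * (D i j *\<^sub>v P x j) $ q)" for q
  have "P x i = x i + vec (d i) S" unfolding S_def using i by (intro pv_eq) auto
  then have Pq: "P x i $ q = x i $ q + S q" using q by simp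
  have Pc: "P x i \<in> carrier_vec (d i)" using pv_carrier i by auto
  have "(\<Sum>j\<in>{1..i}. (-1) ^ (i - j) * (D i j *\<^sub>v P x j) $ q)
      = (-1) ^ (i - i) * (D i i *\<^sub>v P x i) $ q + (\<Sum>j\<in>{1..<i}. (-1) ^ (i - j) * (D i j *\<^sub>v P x j) $ q)"
    using i by (intro split_sum) auto
  also have "(-1) ^ (i - i) * (D i i *\<^sub>v P x i) $ q = P x i $ q"
    using Dm_diag[of i] i Pc by simp
  also have "(\<Sum>j\<in>{1..<i}. (-1) ^ (i - j) * (D i j *\<^sub>v P x j) $ q) = - S q"
    unfolding S_def sum_negf[symmetric] by (intro sum.cong refl) (simp add: sign)
  finally show ?thesis using Pq by simp
qed



lemma Lin_prodsp: "x \<in> prodsp n d \<Longrightarrow> Lin n L C x \<in> prodsp n d"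
proof -
  assume x: "x \<in> prodsp n d"
  have xi: "x i \<in> carrier_vec (d i)" if "i \<in> {1..n}" for i using x that unfolding prodsp_def by simp
  have A: "Lin n L C x i \<in> carrier_vec (d i)" if i: "i \<in> {1..n}" for i
  proof (cases "i = 1")
    case True
    then have "Lin n L C x i = L i *\<^sub>v x i" using i unfolding Lin_def by simp
    then show ?thesis using mult_mat_vec_carrier[OF carr(1)[OF i] xi[OF i]] by simp
  next
    case False
    then have i2: "i \<in> {2..n}" using i by auto
    then have Cc: "C i \<in> carrier_mat (d i) (d (i - 1))" using bspec[OF Cdim i2] by simp
    have e: "Lin n L C x i = L i *\<^sub>v x i + C i *\<^sub>v x (i - 1)" using i False unfolding Lin_def by simp
    have "dim_vec (L i *\<^sub>v x i + C i *\<^sub>v x (i - 1)) = d i" using carrier_matD[OF Cc] by simp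
    then show ?thesis unfolding e carrier_vec_def by simp
  qed
  have B: "\<forall>i. i \<notin> {1..n} \<longrightarrow> Lin n L C x i = 0\<^sub>v 0" unfolding Lin_def by simp
  show ?thesis unfolding prodsp_def using A B by blast
qed



lemma Lin_pow_prodsp: "x \<in> prodsp n d \<Longrightarrow> (Lin n L C ^^ t) x \<in> prodsp n d"
  by (induction t) (auto intro: Lin_prodsp)

lemma traj:
  assumes x: "x \<in> prodsp n d"
  shows "\<forall>i\<in>{1..n}. \<forall>q<d i. (Lin n L C ^^ t) x i $ q = (\<Sum>j\<in>{1..i}. (-1) ^ (i - j) * (D i j *\<^sub>v U x j t) $ q)"
proof (induction t)
  case 0
  show ?case using base x unfolding prodsp_def by auto
next
  case (Suc t)
  define y where "y = (Lin n L C ^^ t) x"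
  have y: "y \<in> prodsp n d" unfolding y_def by (rule Lin_pow_prodsp[OF x])
  have yi: "y i \<in> carrier_vec (d i)" if "i \<in> {1..n}" for i using y that unfolding prodsp_def by auto
  have IH: "\<And>i q. i \<in> {1..n} \<Longrightarrow> q < d i \<Longrightarrow> y i $ q = (\<Sum>j\<in>{1..i}. (-1) ^ (i - j) * (D i j *\<^sub>v U x j t) $ q)"
    using Suc unfolding y_def by auto
  have W: "D i j *\<^sub>v U x j t \<in> carrier_vec (d i)" if "i \<in> {1..n}" "j \<in> {1..i}" for i j
    using Dm_carrier[of j i] U_carrier[where j=j and x=x and t=t] that by auto
  have Us: "U x j (Suc t) = L j *\<^sub>v U x j t" for j by simp
  show ?case
  proof (intro ballI allI impI)
    fix i q assume i: "i \<in> {1..n}" and q: "q < d i"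
    note ci = carr[OF i]
    have ti: "(-1) ^ (i - i) * (D i i *\<^sub>v U x i (Suc t)) $ q = (L i *\<^sub>v U x i t) $ q"
      using Dm_diag[of i] i U_carrier[OF i, where x=x and t="Suc t"] by simp
    have L1: "(L i *\<^sub>v y i) $ q = (\<Sum>j\<in>{1..i}. (-1) ^ (i - j) * (L i *\<^sub>v (D i j *\<^sub>v U x j t)) $ q)"
      using W[OF i] IH[OF i] by (intro mat_vec_lin[OF ci(1) yi[OF i] q]) auto
    also have "\<dots> = (L i *\<^sub>v U x i t) $ q + (\<Sum>j\<in>{1..<i}. (-1) ^ (i - j) * (L i *\<^sub>v (D i j *\<^sub>v U x j t)) $ q)"
      using i Dm_diag[of i] U_carrier[OF i, where x=x and t=t] by (subst split_sum) auto
    finally have L1: "(L i *\<^sub>v y i) $ q = (L i *\<^sub>v U x i t) $ q + (\<Sum>j\<in>{1..<i}. (-1) ^ (i - j) * (L i *\<^sub>v (D i j *\<^sub>v U x j t)) $ q)" .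
    have target: "(\<Sum>j\<in>{1..i}. (-1) ^ (i - j) * (D i j *\<^sub>v U x j (Suc t)) $ q) =
        (L i *\<^sub>v U x i t) $ q + (\<Sum>j\<in>{1..<i}. (-1) ^ (i - j) * (D i j *\<^sub>v (L j *\<^sub>v U x j t)) $ q)"
      using i ti by (subst split_sum) auto
    show "(Lin n L C ^^ Suc t) x i $ q = (\<Sum>j\<in>{1..i}. (-1) ^ (i - j) * (D i j *\<^sub>v U x j (Suc t)) $ q)"
    proof (cases "i = 1")
      case True
      have "(Lin n L C ^^ Suc t) x i = L i *\<^sub>v y i" using True i unfolding y_def Lin_def by simp
      then show ?thesis using L1 target True by simp
    next
      case False
      then have i2: "i \<in> {2..n}" and im: "i - 1 \<in> {1..n}" using i by auto
      have Cc: "C i \<in> carrier_mat (d i) (d (i - 1))" using Cdim i2 by auto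
      have lin: "(Lin n L C ^^ Suc t) x i = L i *\<^sub>v y i + C i *\<^sub>v y (i - 1)"
        using False i unfolding y_def Lin_def by simp
      have C1: "(C i *\<^sub>v y (i - 1)) $ q = (\<Sum>j\<in>{1..i - 1}. (-1) ^ (i - 1 - j) * (C i *\<^sub>v (D (i - 1) j *\<^sub>v U x j t)) $ q)"
        using W[OF im] IH[OF im] by (intro mat_vec_lin[OF Cc yi[OF im] q]) auto
      have e1: "{1..i - 1} = {1..<i}" using i by auto
      have key: "(L i *\<^sub>v (D i j *\<^sub>v U x j t)) $ q = (D i j *\<^sub>v (L j *\<^sub>v U x j t)) $ q + (C i *\<^sub>v (D (i - 1) j *\<^sub>v U x j t)) $ q"
        if j: "j \<in> {1..<i}" for j
      proof -
        have jn: "j \<in> {1..n}" using j i by auto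
        note cj = carr[OF jn]
        have Dij: "D i j \<in> carrier_mat (d i) (d j)" using Dm_carrier[of j i] j i by auto
        have Dij': "D (i - 1) j \<in> carrier_mat (d (i - 1)) (d j)" using Dm_carrier[of j "i - 1"] j i by auto
        have Uc: "U x j t \<in> carrier_vec (d j)" by (rule U_carrier[OF jn])
        have "L i *\<^sub>v (D i j *\<^sub>v U x j t) = (L i * D i j) *\<^sub>v U x j t"
          using ci Dij Uc by simp
        also have "\<dots> = (D i j * L j + C i * D (i - 1) j) *\<^sub>v U x j t" using sylv[of j i] j i by simp
        also have "\<dots> = (D i j * L j) *\<^sub>v U x j t + (C i * D (i - 1) j) *\<^sub>v U x j t"
          by (rule add_mult_distrib_mat_vec) (use Dij cj Cc Dij' Uc in auto)
        also have "\<dots> = D i j *\<^sub>v (L j *\<^sub>v U x j t) + C i *\<^sub>v (D (i - 1) j *\<^sub>v U x j t)"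
          using Dij cj Cc Dij' Uc by simp
        finally show ?thesis using q Cc by simp
      qed
      have "(Lin n L C ^^ Suc t) x i $ q = (L i *\<^sub>v y i) $ q + (C i *\<^sub>v y (i - 1)) $ q"
        unfolding lin using q Cc by simp
      also have "\<dots> = (L i *\<^sub>v U x i t) $ q + (\<Sum>j\<in>{1..<i}. (-1) ^ (i - j) * ((D i j *\<^sub>v (L j *\<^sub>v U x j t)) $ q + (C i *\<^sub>v (D (i - 1) j *\<^sub>v U x j t)) $ q))
          + (\<Sum>j\<in>{1..<i}. - ((-1) ^ (i - j) * (C i *\<^sub>v (D (i - 1) j *\<^sub>v U x j t)) $ q))"
        unfolding L1 C1 e1 by (intro arg_cong2[where f = "(+)"] refl sum.cong) (auto simp: key sign)
      also have "\<dots> = (L i *\<^sub>v U x i t) $ q + (\<Sum>j\<in>{1..<i}. (-1) ^ (i - j) * (D i j *\<^sub>v (L j *\<^sub>v U x j t)) $ q)"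
        by (simp add: distrib_left sum.distrib sum_negf)
      finally show ?thesis using target by simp
    qed
  qed
qed


lemma Nom_pow: "i \<in> {1..n} \<Longrightarrow> (Nom n L ^^ t) w i = ((\<lambda>v. L i *\<^sub>v v) ^^ t) (w i)"
  by (induction t) (auto simp: Nom_def)

lemma U_expand:
  assumes j: "j \<in> {1..n}"
  shows "U x j t = V j *\<^sub>v vec (d j) (\<lambda>m. lam j m ^ t * (Vi j *\<^sub>v P x j) $ m)"
proof (induction t)
  case 0
  have Pc: "P x j \<in> carrier_vec (d j)" using pv_carrier j by auto
  have "vec (d j) (\<lambda>m. lam j m ^ 0 * (Vi j *\<^sub>v P x j) $ m) = Vi j *\<^sub>v P x j"
    using carr[OF j] by (intro eq_vecI) auto
  then show ?case using cancelv(1)[OF j, of "P x j"] Pc carr[OF j] by simp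
next
  case (Suc t)
  note c = carr[OF j]
  define z where "z = vec (d j) (\<lambda>m. lam j m ^ t * (Vi j *\<^sub>v P x j) $ m)"
  have zc: "z \<in> carrier_vec (d j)" unfolding z_def by simp
  have "Lam j *\<^sub>v z = vec (d j) (\<lambda>m. lam j m ^ Suc t * (Vi j *\<^sub>v P x j) $ m)"
  proof (rule eq_vecI)
    fix m assume "m < dim_vec (vec (d j) (\<lambda>m. lam j m ^ Suc t * (Vi j *\<^sub>v P x j) $ m))"
    then have m: "m < d j" by simp
    have "(Lam j *\<^sub>v z) $ m = (\<Sum>l<d j. Lam j $$ (m, l) * z $ l)"
      by (rule mat_vec_entry[OF diag_of_carrier zc m])
    also have "\<dots> = (\<Sum>l<d j. if l = m then lam j m * z $ m else 0)"
      using m by (intro sum.cong) (auto simp: diag_of_def)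
    also have "\<dots> = lam j m * z $ m" using m by simp
    finally show "(Lam j *\<^sub>v z) $ m = vec (d j) (\<lambda>m. lam j m ^ Suc t * (Vi j *\<^sub>v P x j) $ m) $ m"
      using m unfolding z_def by simp
  qed simp
  moreover have "L j *\<^sub>v (V j *\<^sub>v z) = V j *\<^sub>v (Lam j *\<^sub>v z)"
  proof -
    have "L j *\<^sub>v (V j *\<^sub>v z) = (L j * V j) *\<^sub>v z" using c zc by simp
    also have "\<dots> = (V j * Lam j) *\<^sub>v z" using diagz j by simp
    also have "\<dots> = V j *\<^sub>v (Lam j *\<^sub>v z)" by (rule assoc_mult_mat_vec[OF c(2) diag_of_carrier zc])
    finally show ?thesis .
  qed
  ultimately show ?case using Suc unfolding z_def by simp
qed

lemma chain:
  assumes inc: "\<forall>k\<in>{1..<n}. f k < f (Suc k)" and j: "1 \<le> j" "j < i" "i \<le> n"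
  shows "f j < (f i :: real)"
  using j
proof (induction i)
  case 0 then show ?case by simp
next
  case (Suc i)
  have s: "f i < f (Suc i)" using inc Suc.prems by auto
  show ?case
  proof (cases "j = i")
    case True then show ?thesis using s by simp
  next
    case False then show ?thesis using Suc s by auto
  qed
qed

lemma term_expand:
  assumes i: "i \<in> {1..n}" and j: "j \<in> {1..i}" and s: "s < d i"
  shows "(Vi i *\<^sub>v (D i j *\<^sub>v U x j t)) $ s =
     (\<Sum>m<d j. (Vi i * D i j * V j) $$ (s, m) * (Vi j *\<^sub>v P x j) $ m * lam j m ^ t)"
proof -
  have jn: "j \<in> {1..n}" using i j by auto
  note ci = carr[OF i] and cj = carr[OF jn]
  have Dc: "D i j \<in> carrier_mat (d i) (d j)" using Dm_carrier[of j i] i j by auto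
  define z where "z = vec (d j) (\<lambda>m. lam j m ^ t * (Vi j *\<^sub>v P x j) $ m)"
  have zc: "z \<in> carrier_vec (d j)" unfolding z_def by simp
  have G: "Vi i * D i j * V j \<in> carrier_mat (d i) (d j)" using ci Dc cj by simp
  have "Vi i *\<^sub>v (D i j *\<^sub>v U x j t) = Vi i *\<^sub>v (D i j *\<^sub>v (V j *\<^sub>v z))"
    unfolding z_def U_expand[OF jn] ..
  also have "\<dots> = (Vi i * D i j * V j) *\<^sub>v z"
    using assoc_mult_mat_vec[OF mult_carrier_mat[OF ci(4) Dc] cj(2) zc]
      assoc_mult_mat_vec[OF ci(4) Dc mult_mat_vec_carrier[OF cj(2) zc]] by simp
  finally have "(Vi i *\<^sub>v (D i j *\<^sub>v U x j t)) $ s = (\<Sum>m<d j. (Vi i * D i j * V j) $$ (s, m) * z $ m)"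
    using mat_vec_entry[OF G zc s] by simp
  also have "\<dots> = (\<Sum>m<d j. (Vi i * D i j * V j) $$ (s, m) * (Vi j *\<^sub>v P x j) $ m * lam j m ^ t)"
    unfolding z_def by (intro sum.cong) auto
  finally show ?thesis .
qed


lemma main_lin:
  fixes nrm :: "nat \<Rightarrow> complex vec \<Rightarrow> real"
  assumes x: "x \<in> prodsp n d" and i: "i \<in> {1..n}" and s: "s < d i"
    and norms: "\<forall>i\<in>{1..n}. is_vnorm (d i) (nrm i)"
    and normincr: "\<forall>i\<in>{1..<n}. op_norm (d i) (nrm i) (L i) < op_norm (d (Suc i)) (nrm (Suc i)) (L (Suc i))"
    and dpos: "\<forall>i\<in>{1..n}. d i \<ge> 1"
  shows "(\<lambda>t. cmod (Psi d V i s ((Lin n L C ^^ t) x) - Psi d V i s ((Nom n L ^^ t) (pert n d L C V lam x)))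
           / op_norm (d i) (nrm i) (L i) ^ t) \<longlonglongrightarrow> 0"
proof -
  define op where "op k = op_norm (d k) (nrm k) (L k)" for k
  define c where "c j m = (-1) ^ (i - j) * ((Vi i * D i j * V j) $$ (s, m) * (Vi j *\<^sub>v P x j) $ m)" for j m
  note ci = carr[OF i]
  have diff: "Psi d V i s ((Lin n L C ^^ t) x) - Psi d V i s ((Nom n L ^^ t) (pert n d L C V lam x))
      = (\<Sum>j\<in>{1..<i}. \<Sum>m<d j. c j m * lam j m ^ t)" for t
  proof -
    have yc: "(Lin n L C ^^ t) x i \<in> carrier_vec (d i)"
      using Lin_pow_prodsp[OF x, of t] i unfolding prodsp_def by auto
    have W: "D i j *\<^sub>v U x j t \<in> carrier_vec (d i)" if "j \<in> {1..i}" for j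
      using Dm_carrier[of j i] U_carrier[where j=j and x=x and t=t] that i by auto
    have tr: "\<And>q. q < d i \<Longrightarrow> (Lin n L C ^^ t) x i $ q = (\<Sum>j\<in>{1..i}. (-1) ^ (i - j) * (D i j *\<^sub>v U x j t) $ q)"
      using traj[OF x, of t] i by auto
    have "Psi d V i s ((Lin n L C ^^ t) x) = (Vi i *\<^sub>v (Lin n L C ^^ t) x i) $ s" by (simp add: Psi_def)
    also have "\<dots> = (\<Sum>j\<in>{1..i}. (-1) ^ (i - j) * (Vi i *\<^sub>v (D i j *\<^sub>v U x j t)) $ s)"
      using W tr by (intro mat_vec_lin[OF ci(4) yc s]) auto
    also have "\<dots> = (Vi i *\<^sub>v U x i t) $ s + (\<Sum>j\<in>{1..<i}. (-1) ^ (i - j) * (Vi i *\<^sub>v (D i j *\<^sub>v U x j t)) $ s)"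
      using i Dm_diag[of i] U_carrier[OF i, where x=x and t=t] by (subst split_sum) auto
    finally have e1: "Psi d V i s ((Lin n L C ^^ t) x) = (Vi i *\<^sub>v U x i t) $ s + (\<Sum>j\<in>{1..<i}. (-1) ^ (i - j) * (Vi i *\<^sub>v (D i j *\<^sub>v U x j t)) $ s)" .
    have e2: "Psi d V i s ((Nom n L ^^ t) (pert n d L C V lam x)) = (Vi i *\<^sub>v U x i t) $ s"
      unfolding Psi_def Nom_pow[OF i] pert_pv[OF i] ..
    have e3: "(-1) ^ (i - j) * (Vi i *\<^sub>v (D i j *\<^sub>v U x j t)) $ s = (\<Sum>m<d j. c j m * lam j m ^ t)"
      if "j \<in> {1..<i}" for j
    proof -
      have j': "j \<in> {1..i}" using that by auto
      show ?thesis unfolding term_expand[OF i j' s] c_def by (simp add: sum_distrib_left mult.assoc)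
    qed
    show ?thesis unfolding e1 e2 using e3 by simp
  qed
  show ?thesis
  proof (cases "i = 1")
    case True
    then show ?thesis unfolding diff by simp
  next
    case False
    have bnd: "cmod (lam j m) < op i" if j: "j \<in> {1..<i}" and m: "m < d j" for j m
    proof -
      have jn: "j \<in> {1..n}" using j i by auto
      have ev: "eigenvector (L j) (col (V j) m) (lam j m)" by (rule eigvec[OF jn m])
      have N: "is_vnorm (d j) (nrm j)" using norms jn by blast
      have dr: "dim_row (L j) = d j" using carr(1)[OF jn] by simp
      have e3: "col (V j) m \<in> carrier_vec (d j)" "col (V j) m \<noteq> 0\<^sub>v (d j)"
          "L j *\<^sub>v col (V j) m = lam j m \<cdot>\<^sub>v col (V j) m"
        using ev unfolding eigenvector_def dr by auto
      have "cmod (lam j m) \<le> op j" unfolding op_def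
        by (rule eig_le_opnorm[OF N carr(1)[OF jn] e3])
      also have "op j < op i" unfolding op_def
        by (rule chain[OF normincr]) (use j i in auto)
      finally show ?thesis .
    qed
    have "1 \<in> {1..n}" using i by auto
    then have d1: "0 < d 1" using dpos by fastforce
    have "1 \<in> {1..<i}" using False i by auto
    then have "cmod (lam 1 0) < op i" using bnd d1 by blast
    then have oppos: "op i > 0" using norm_ge_zero[of "lam 1 0"] by linarith
    have T: "(\<lambda>t. (\<Sum>j\<in>{1..<i}. \<Sum>m<d j. c j m * (lam j m / complex_of_real (op i)) ^ t)) \<longlonglongrightarrow> 0"
    proof (intro tendsto_null_sum)
      fix j m assume j: "j \<in> {1..<i}" and "m \<in> {..<d j}"
      then have m: "m < d j" by simp
      have "norm (lam j m / complex_of_real (op i)) < 1"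
        using bnd[OF j m] oppos by (simp add: norm_divide)
      then have "(\<lambda>t. (lam j m / complex_of_real (op i)) ^ t) \<longlonglongrightarrow> 0" by (rule LIMSEQ_power_zero)
      then have "(\<lambda>t. c j m * (lam j m / complex_of_real (op i)) ^ t) \<longlonglongrightarrow> c j m * 0"
        by (intro tendsto_mult tendsto_const)
      then show "(\<lambda>t. c j m * (lam j m / complex_of_real (op i)) ^ t) \<longlonglongrightarrow> 0" by simp
    qed
    have eq: "cmod (\<Sum>j\<in>{1..<i}. \<Sum>m<d j. c j m * lam j m ^ t) / op i ^ t =
        cmod (\<Sum>j\<in>{1..<i}. \<Sum>m<d j. c j m * (lam j m / complex_of_real (op i)) ^ t)" for t
    proof -
      have "(\<Sum>j\<in>{1..<i}. \<Sum>m<d j. c j m * (lam j m / complex_of_real (op i)) ^ t)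
          = (\<Sum>j\<in>{1..<i}. \<Sum>m<d j. c j m * lam j m ^ t) / complex_of_real (op i ^ t)"
        by (simp add: power_divide sum_divide_distrib)
      moreover have "cmod (complex_of_real (op i) ^ t) = op i ^ t" using oppos by (simp add: norm_power)
      ultimately show ?thesis by (simp add: norm_divide)
    qed
    show ?thesis unfolding diff op_def[symmetric] eq by (rule tendsto_norm_zero[OF T])
  qed
qed


end


lemma Nom_prodsp:
  assumes Ldim: "\<forall>i\<in>{1..n}. L i \<in> carrier_mat (d i) (d i)" and x: "x \<in> prodsp n d"
  shows "Nom n L x \<in> prodsp n d"
proof -
  have xi: "x i \<in> carrier_vec (d i)" if "i \<in> {1..n}" for i using x that unfolding prodsp_def by simp
  have A: "Nom n L x i \<in> carrier_vec (d i)" if i: "i \<in> {1..n}" for i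
  proof -
    have "Nom n L x i = L i *\<^sub>v x i" using i unfolding Nom_def by simp
    then show ?thesis using mult_mat_vec_carrier[OF bspec[OF Ldim i] xi[OF i]] by simp
  qed
  have B: "\<forall>i. i \<notin> {1..n} \<longrightarrow> Nom n L x i = 0\<^sub>v 0" unfolding Nom_def by simp
  show ?thesis unfolding prodsp_def using A B by blast
qed

lemma NonLin_prodsp:
  assumes Ldim: "\<forall>i\<in>{1..n}. L i \<in> carrier_mat (d i) (d i)"
    and N1map: "\<forall>v\<in>carrier_vec (d 1). N1 v \<in> carrier_vec (d 1)"
    and Nmap: "\<forall>i\<in>{2..n}. \<forall>u\<in>carrier_vec (d (i - 1)). \<forall>v\<in>carrier_vec (d i). N i u v \<in> carrier_vec (d i)"
    and x: "x \<in> prodsp n d"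
  shows "NonLin n L C N1 N x \<in> prodsp n d"
proof -
  have xi: "x i \<in> carrier_vec (d i)" if "i \<in> {1..n}" for i using x that unfolding prodsp_def by simp
  have A: "NonLin n L C N1 N x i \<in> carrier_vec (d i)" if i: "i \<in> {1..n}" for i
  proof (cases "i = 1")
    case True
    then have e: "NonLin n L C N1 N x i = L 1 *\<^sub>v x 1 + N1 (x 1)" using i unfolding NonLin_def by simp
    have "N1 (x 1) \<in> carrier_vec (d 1)" using N1map xi[OF i] True by simp
    then have "dim_vec (L 1 *\<^sub>v x 1 + N1 (x 1)) = d 1" by simp
    then show ?thesis unfolding e carrier_vec_def using True by simp
  next
    case False
    then have i2: "i \<in> {2..n}" and im: "i - 1 \<in> {1..n}" using i by auto
    have e: "NonLin n L C N1 N x i = L i *\<^sub>v x i + C i *\<^sub>v x (i - 1) + N i (x (i - 1)) (x i)"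
      using i False unfolding NonLin_def by simp
    have "N i (x (i - 1)) (x i) \<in> carrier_vec (d i)" using bspec[OF Nmap i2] xi[OF i] xi[OF im] by simp
    then have "dim_vec (L i *\<^sub>v x i + C i *\<^sub>v x (i - 1) + N i (x (i - 1)) (x i)) = d i" by simp
    then show ?thesis unfolding e carrier_vec_def by simp
  qed
  have B: "\<forall>i. i \<notin> {1..n} \<longrightarrow> NonLin n L C N1 N x i = 0\<^sub>v 0" unfolding NonLin_def by simp
  show ?thesis unfolding prodsp_def using A B by blast
qed

lemma pert_prodsp: "pert n d L C V lam x \<in> prodsp n d"
  unfolding prodsp_def using pert_pv[of _ n d L C V lam x] pv_carrier by (auto simp: pert_def)

theorem theorem4:
  fixes n :: nat and d :: "nat \<Rightarrow> nat"
    and nrm :: "nat \<Rightarrow> complex vec \<Rightarrow> real"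
    and L C V :: "nat \<Rightarrow> complex mat" and lam :: "nat \<Rightarrow> nat \<Rightarrow> complex"
    and N1 :: "complex vec \<Rightarrow> complex vec"
    and N :: "nat \<Rightarrow> complex vec \<Rightarrow> complex vec \<Rightarrow> complex vec"
    and \<tau> \<tau>inv :: "(nat \<Rightarrow> complex vec) \<Rightarrow> (nat \<Rightarrow> complex vec)"
  assumes n: "n \<ge> 1"
    and dpos: "\<forall>i\<in>{1..n}. d i \<ge> 1"
    and norms: "\<forall>i\<in>{1..n}. is_vnorm (d i) (nrm i)"
    and Ldim: "\<forall>i\<in>{1..n}. L i \<in> carrier_mat (d i) (d i)"
    and Cdim: "\<forall>i\<in>{2..n}. C i \<in> carrier_mat (d i) (d (i - 1))"
    and Linv: "\<forall>i\<in>{1..n}. invertible_mat (L i)"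
    and Vdim: "\<forall>i\<in>{1..n}. V i \<in> carrier_mat (d i) (d i)"
    and Vinv: "\<forall>i\<in>{1..n}. invertible_mat (V i)"
    and diagz: "\<forall>i\<in>{1..n}. L i * V i = V i * diag_of (d i) (lam i)"
    and disj: "\<forall>i\<in>{1..n}. \<forall>j\<in>{1..n}. i \<noteq> j \<longrightarrow> spectrum (L i) \<inter> spectrum (L j) = {}"
    and normincr: "\<forall>i\<in>{1..<n}. op_norm (d i) (nrm i) (L i) < op_norm (d (Suc i)) (nrm (Suc i)) (L (Suc i))"
    and normle1: "op_norm (d n) (nrm n) (L n) \<le> 1"
    and N1map: "\<forall>v\<in>carrier_vec (d 1). N1 v \<in> carrier_vec (d 1)"
    and Nmap: "\<forall>i\<in>{2..n}. \<forall>u\<in>carrier_vec (d (i - 1)). \<forall>v\<in>carrier_vec (d i).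
                 N i u v \<in> carrier_vec (d i)"
    and homeo: "homeoX n d \<tau> \<tau>inv"
    and conj: "\<forall>x\<in>prodsp n d. Lin n L C x = \<tau>inv (NonLin n L C N1 N (\<tau> x))"
  shows "\<forall>i\<in>{1..n}. \<forall>s<d i. \<forall>y\<in>prodsp n d.
    (\<lambda>t. cmod (Psi d V i s (\<tau>inv ((NonLin n L C N1 N ^^ t) y))
               - Psi d V i s (\<tau>inv (((\<tau> \<circ> Nom n L \<circ> \<tau>inv) ^^ t) ((\<tau> \<circ> pert n d L C V lam \<circ> \<tau>inv) y))))
          / op_norm (d i) (nrm i) (L i) ^ t) \<longlonglongrightarrow> 0"
proof (intro ballI allI impI)
  fix i s y assume i: "i \<in> {1..n}" and s: "s < d i" and y: "y \<in> prodsp n d"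
  interpret setting n d L C V lam
    by (unfold_locales; fact)
  have h1: "\<And>x. x \<in> prodsp n d \<Longrightarrow> \<tau> x \<in> prodsp n d" and h2: "\<And>y. y \<in> prodsp n d \<Longrightarrow> \<tau>inv y \<in> prodsp n d"
    and h3: "\<And>x. x \<in> prodsp n d \<Longrightarrow> \<tau>inv (\<tau> x) = x" and h4: "\<And>y. y \<in> prodsp n d \<Longrightarrow> \<tau> (\<tau>inv y) = y"
    using homeo unfolding homeoX_def by auto
  define x where "x = \<tau>inv y"
  have x: "x \<in> prodsp n d" unfolding x_def using h2 y by simp
  have yx: "y = \<tau> x" unfolding x_def using h4 y by simp
  have A: "(NonLin n L C N1 N ^^ t) (\<tau> z) = \<tau> ((Lin n L C ^^ t) z)" if z: "z \<in> prodsp n d" for t z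
  proof (induction t)
    case 0 then show ?case by simp
  next
    case (Suc t)
    have w: "(Lin n L C ^^ t) z \<in> prodsp n d" by (rule Lin_pow_prodsp[OF z])
    have "NonLin n L C N1 N (\<tau> ((Lin n L C ^^ t) z)) \<in> prodsp n d"
      using NonLin_prodsp[OF Ldim N1map Nmap h1[OF w]] .
    then have "\<tau> (Lin n L C ((Lin n L C ^^ t) z)) = NonLin n L C N1 N (\<tau> ((Lin n L C ^^ t) z))"
      using bspec[OF conj w] h4 by simp
    then show ?case using Suc by simp
  qed
  have B: "((\<tau> \<circ> Nom n L \<circ> \<tau>inv) ^^ t) (\<tau> w) = \<tau> ((Nom n L ^^ t) w)" if w: "w \<in> prodsp n d" for t w
  proof (induction t)
    case 0 then show ?case by simp
  next
    case (Suc t)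
    have "(Nom n L ^^ t) w \<in> prodsp n d" by (induction t) (auto intro: Nom_prodsp[OF Ldim] w)
    then show ?case using Suc h3 by simp
  qed
  have e1: "\<tau>inv ((NonLin n L C N1 N ^^ t) y) = (Lin n L C ^^ t) x" for t
    unfolding yx A[OF x] using h3 Lin_pow_prodsp[OF x] by simp
  have e2: "\<tau>inv (((\<tau> \<circ> Nom n L \<circ> \<tau>inv) ^^ t) ((\<tau> \<circ> pert n d L C V lam \<circ> \<tau>inv) y)) = (Nom n L ^^ t) (pert n d L C V lam x)" for t
  proof -
    have "(\<tau> \<circ> pert n d L C V lam \<circ> \<tau>inv) y = \<tau> (pert n d L C V lam x)" unfolding x_def by simp
    moreover have "(Nom n L ^^ t) (pert n d L C V lam x) \<in> prodsp n d"
      by (induction t) (auto intro: Nom_prodsp[OF Ldim] pert_prodsp)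
    ultimately show ?thesis using B[OF pert_prodsp] h3 by simp
  qed
  show "(\<lambda>t. cmod (Psi d V i s (\<tau>inv ((NonLin n L C N1 N ^^ t) y))
               - Psi d V i s (\<tau>inv (((\<tau> \<circ> Nom n L \<circ> \<tau>inv) ^^ t) ((\<tau> \<circ> pert n d L C V lam \<circ> \<tau>inv) y))))
          / op_norm (d i) (nrm i) (L i) ^ t) \<longlonglongrightarrow> 0"
    unfolding e1 e2 by (rule main_lin[OF x i s norms normincr dpos])
qed

end
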